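(* Let $F_1,F_2\subset\mathbb R^d$ be solid sets providing a normal decomposition of $F=F_1\cup F_2$, and let $C=\partial F_1\cup\partial F_2$. Then (i) $\Theta_{d-1}\big(C,\{(x,u)\in\mathrm{Nor}(C):x\in\partial F\cap\partial F_1\cap\partial F_2\}\big)=0$; (ii) $\frac1\varepsilon\mu_d\big((\partial F_1\triangle\partial F_2)_\varepsilon\cap(\partial F_1\cap\partial F_2)_\varepsilon\big)\to0$ as $\varepsilon\to0^+$; (iii) $\frac1\varepsilon\mu_d\big(((\partial F_1)_\varepsilon\cap(\partial F_2)_\varepsilon)\setminus(\partial F_1\cap\partial F_2)_\varepsilon\big)\to0$ as $\varepsilon\to0^+$.
   Context: $\mu_d$ is Lebesgue measure on $\mathbb R^d$. For a nonempty closed $G\subset\mathbb R^d$: $d_G(z)=\min_{x\in G}\|z-x\|$, $G_\varepsilon=\{z:d_G(z)\le\varepsilon\}$ (with $\emptyset_\varepsilon=\emptyset$); the skeleton $S_G$ is the set of points with more than one nearest point in $G$, $p_G(z)$ the unique nearest point for $z\notin S_G$, $u_G(z)=(z-p_G(z))/d_G(z)$ for $z\notin S_G\cup G$; $\mathrm{Nor}(G)=\{(p_G(z),u_G(z)):z\notin S_G\cup G\}$, and $r_G(x,u)=\sup\{s>0:p_G(x+su)=x\}$. The support measures $\Theta_0(G,\cdot),\dots,\Theta_{d-1}(G,\cdot)$ are the uniquely determined (locally finite, signed) reach measures on $\mathrm{Nor}(G)$ satisfying the local Steiner formula $\int_{\mathbb R^d\setminus G}f\,d\mu_d=\sum_{j=1}^d\binom{d-1}{j-1}\int_{\mathrm{Nor}(G)}\int_0^{r_G(x,u)}f(x+tu)t^{j-1}dt\,\Theta_{d-j}(G,d(x,u))$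 for bounded measurable compactly supported $f$; $\Theta_{d-1}(G,\cdot)$ is a nonnegative measure. A set is solid if it is compact, equals the closure of its interior and its boundary has Lebesgue measure $0$. Solid sets $F_1,F_2$ provide a normal decomposition of $F=F_1\cup F_2$ if $F_1\cap F_2\subset\partial F_1\cap\partial F_2$ and $\frac1\varepsilon\mu_d\big((\partial F)_\varepsilon\cap(\partial F_1)_\varepsilon\cap(\partial F_2)_\varepsilon\big)\to0$ as $\varepsilon\to0^+$. *)

theory Defs
  imports "HOL-Analysis.Analysis"
begin

definition par_set :: "'a::euclidean_space set \<Rightarrow> real \<Rightarrow> 'a set" where
  "par_set G \<epsilon> = (if G = {} then {} else {z. infdist z G \<le> \<epsilon>})"

definition unique_nearest :: "'a::euclidean_space set \<Rightarrow> 'a \<Rightarrow> 'a \<Rightarrow> bool" where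
  "unique_nearest G z x \<longleftrightarrow> x \<in> G \<and> (\<forall>y\<in>G. dist z x \<le> dist z y) \<and>
      (\<forall>y\<in>G. dist z y = dist z x \<longrightarrow> y = x)"

definition Nor :: "'a::euclidean_space set \<Rightarrow> ('a \<times> 'a) set" where
  "Nor G = {(x, (z - x) /\<^sub>R norm (z - x)) | z x. z \<notin> G \<and> unique_nearest G z x}"

definition reach_fun :: "'a::euclidean_space set \<Rightarrow> 'a \<Rightarrow> 'a \<Rightarrow> ereal" where
  "reach_fun G x u = Sup {ereal s | s. s > 0 \<and> unique_nearest G (x + s *\<^sub>R u) x}"

definition solid :: "'a::euclidean_space set \<Rightarrow> bool" where
  "solid F \<longleftrightarrow> compact F \<and> closure (interior F) = F \<and> emeasure lborel (frontier F) = 0"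

definition normal_decomposition :: "'a::euclidean_space set \<Rightarrow> 'a set \<Rightarrow> bool" where
  "normal_decomposition F1 F2 \<longleftrightarrow> solid F1 \<and> solid F2 \<and>
     F1 \<inter> F2 \<subseteq> frontier F1 \<inter> frontier F2 \<and>
     ((\<lambda>\<epsilon>. measure lborel (par_set (frontier (F1 \<union> F2)) \<epsilon> \<inter> par_set (frontier F1) \<epsilon>
                    \<inter> par_set (frontier F2) \<epsilon>) / \<epsilon>) \<longlongrightarrow> 0) (at_right 0)"

text \<open>A signed measure on pairs is represented by its Jordan decomposition (P, N):
  two mutually singular (nonnegative) Borel measures, Theta = P - N.\<close>
definition reach_measure :: "'a::euclidean_space set \<Rightarrow> ('a \<times> 'a) measure \<Rightarrow> bool" where
  "reach_measure G M \<longleftrightarrow> sets M = sets borel \<and>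
     (\<exists>B\<in>sets borel. B \<subseteq> Nor G \<and> emeasure M (UNIV - B) = 0) \<and>
     (\<forall>K \<delta>. compact K \<and> \<delta> > 0 \<longrightarrow>
        (\<exists>B\<in>sets borel. {(x, u) \<in> Nor G. x \<in> K \<and> ereal \<delta> \<le> reach_fun G x u} \<subseteq> B
                         \<and> emeasure M B < \<infinity>))"

definition steiner_integrand ::
  "'a::euclidean_space set \<Rightarrow> ('a \<Rightarrow> real) \<Rightarrow> nat \<Rightarrow> 'a \<times> 'a \<Rightarrow> real" where
  "steiner_integrand G f j = (\<lambda>(x, u).
      LINT t : {t. 0 < t \<and> ereal t < reach_fun G x u} | lborel. f (x + t *\<^sub>R u) * t ^ (j - 1))"

text \<open>Theta i = (P, N) represents the support measure Theta_i(G, .) = P - N, i = 0..d-1,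
  characterised by the local Steiner formula.\<close>
definition support_measures ::
  "'a::euclidean_space set \<Rightarrow> (nat \<Rightarrow> ('a \<times> 'a) measure \<times> ('a \<times> 'a) measure) \<Rightarrow> bool" where
  "support_measures G \<Theta> \<longleftrightarrow>
     (\<forall>i < DIM('a). reach_measure G (fst (\<Theta> i)) \<and> reach_measure G (snd (\<Theta> i)) \<and>
        (\<exists>S\<in>sets borel. emeasure (fst (\<Theta> i)) (UNIV - S) = 0 \<and> emeasure (snd (\<Theta> i)) S = 0)) \<and>
     (\<forall>f :: 'a \<Rightarrow> real. f \<in> borel_measurable borel \<and> bounded (range f) \<and> bounded {z. f z \<noteq> 0}
        \<longrightarrow> (\<forall>j\<in>{1..DIM('a)}.
               integrable (fst (\<Theta> (DIM('a) - j))) (steiner_integrand G f j) \<and>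
               integrable (snd (\<Theta> (DIM('a) - j))) (steiner_integrand G f j)) \<and>
            (LINT z : (UNIV - G) | lborel. f z) =
              (\<Sum>j = 1..DIM('a). real (DIM('a) - 1 choose (j - 1)) *
                 ((\<integral>p. steiner_integrand G f j p \<partial>fst (\<Theta> (DIM('a) - j))) -
                  (\<integral>p. steiner_integrand G f j p \<partial>snd (\<Theta> (DIM('a) - j))))))"

end

theory Submission
  imports Defs
begin

lemma frontier_diff_sub:
  fixes F1 F2 :: "'a::euclidean_space set"
  assumes "closed F1" "closed F2" "F1 \<inter> F2 \<subseteq> frontier F1 \<inter> frontier F2"
  shows "frontier F1 - frontier F2 \<subseteq> frontier (F1 \<union> F2)"
proof
  fix x assume x: "x \<in> frontier F1 - frontier F2"
  have xF1: "x \<in> F1" using x assms(1) frontier_subset_closed by blast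
  have xF2: "x \<notin> F2" using x xF1 assms(3) by blast
  have "x \<in> closure (F1 \<union> F2)" using xF1 closure_subset by blast
  moreover have "x \<notin> interior (F1 \<union> F2)"
  proof
    assume xi: "x \<in> interior (F1 \<union> F2)"
    have "interior (F1 \<union> F2) \<inter> (- F2) \<subseteq> F1" using interior_subset by blast
    moreover have "open (interior (F1 \<union> F2) \<inter> (- F2))" using assms(2) by auto
    ultimately have "x \<in> interior F1" using xi xF2 interior_maximal by (metis ComplI IntI interiorI)
    thus False using x by (simp add: frontier_def)
  qed
  ultimately show "x \<in> frontier (F1 \<union> F2)" by (simp add: frontier_def)
qed

lemma par_set_closed: "closed (par_set G e)"
  unfolding par_set_def by (auto intro!: closed_Collect_le continuous_intros)

lemma par_set_compact:
  fixes G :: "'a::euclidean_space set"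
  assumes "compact G" shows "compact (par_set G e)"
proof (cases "G = {}")
  case True thus ?thesis by (simp add: par_set_def)
next
  case False
  obtain R where R: "\<And>x. x \<in> G \<Longrightarrow> norm x \<le> R" using assms compact_imp_bounded bounded_iff by metis
  have "par_set G e \<subseteq> cball 0 (R + e)"
  proof
    fix z assume "z \<in> par_set G e"
    hence z: "infdist z G \<le> e" using False by (simp add: par_set_def)
    obtain x where x: "x \<in> G" "infdist z G = dist z x"
      using infdist_attains_inf[OF compact_imp_closed[OF assms] False] by blast
    have "norm z \<le> norm x + dist z x" by (metis dist_norm norm_triangle_sub add.commute)
    thus "z \<in> cball 0 (R + e)" using R[OF x(1)] x z by simp
  qed
  thus ?thesis using par_set_closed by (meson bounded_cball bounded_subset compact_eq_bounded_closed)
qed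

lemma par_set_mem:
  assumes "x \<in> G" "dist z x \<le> e" shows "z \<in> par_set G e"
  using assms infdist_le2[of x G z e] by (auto simp: par_set_def)

lemma par_set_sub:
  assumes "G \<subseteq> H" "G \<noteq> {}"
  shows "par_set G e \<subseteq> par_set H e"
  using assms by (auto simp: par_set_def intro: order_trans[OF infdist_mono[OF assms]])

lemma measure_le_compact:
  fixes A B :: "'a::euclidean_space set"
  assumes "A \<subseteq> B" "A \<in> sets lborel" "compact B"
  shows "measure lborel A \<le> measure lborel B"
  using assms by (intro measure_mono_fmeasurable) (auto intro: fmeasurable_compact)

lemma squeeze0:
  fixes g h :: "real \<Rightarrow> real"
  assumes "(h \<longlongrightarrow> 0) (at_right 0)" "\<And>e. 0 < e \<Longrightarrow> 0 \<le> g e" "\<And>e. 0 < e \<Longrightarrow> g e \<le> h e"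
  shows "(g \<longlongrightarrow> 0) (at_right 0)"
proof (rule tendsto_sandwich[where f="\<lambda>_. 0" and h=h])
  have ev: "\<forall>\<^sub>F e in at_right (0::real). 0 < e" by (simp add: eventually_at_right_less)
  show "\<forall>\<^sub>F e in at_right 0. 0 \<le> g e" using assms(2) by (auto intro: eventually_mono[OF ev])
  show "\<forall>\<^sub>F e in at_right 0. g e \<le> h e" using assms(3) by (auto intro: eventually_mono[OF ev])
qed (use assms in auto)

lemma part23:
  fixes F1 F2 :: "'a::euclidean_space set"
  assumes nd: "normal_decomposition F1 F2"
  shows "((\<lambda>\<epsilon>. measure lborel
              (par_set ((frontier F1 - frontier F2) \<union> (frontier F2 - frontier F1)) \<epsilon>
               \<inter> par_set (frontier F1 \<inter> frontier F2) \<epsilon>) / \<epsilon>) \<longlongrightarrow> 0) (at_right 0)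
       \<and> ((\<lambda>\<epsilon>. measure lborel
              ((par_set (frontier F1) \<epsilon> \<inter> par_set (frontier F2) \<epsilon>)
               - par_set (frontier F1 \<inter> frontier F2) \<epsilon>) / \<epsilon>) \<longlongrightarrow> 0) (at_right 0)"
proof -
  let ?F = "F1 \<union> F2"
  let ?P = "\<lambda>e. par_set (frontier ?F) e \<inter> par_set (frontier F1) e \<inter> par_set (frontier F2) e"
  have s1: "solid F1" and s2: "solid F2" and int: "F1 \<inter> F2 \<subseteq> frontier F1 \<inter> frontier F2"
    and lim: "((\<lambda>e. measure lborel (?P e) / e) \<longlongrightarrow> 0) (at_right 0)"
    using nd by (auto simp: normal_decomposition_def)
  have c1: "compact F1" and c2: "compact F2" using s1 s2 by (auto simp: solid_def)
  have cl1: "closed F1" and cl2: "closed F2" using c1 c2 compact_imp_closed by auto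
  have fc1: "compact (frontier F1)" and fc2: "compact (frontier F2)" using c1 c2 by auto
  have fcF: "compact (frontier ?F)" using c1 c2 by auto
  have cP: "compact (?P e)" for e using fc1 fc2 fcF
    by (intro compact_Int par_set_compact)
  have d12: "frontier F1 - frontier F2 \<subseteq> frontier ?F" using frontier_diff_sub[OF cl1 cl2 int] .
  have d21: "frontier F2 - frontier F1 \<subseteq> frontier ?F" using frontier_diff_sub[OF cl2 cl1] int
    by (metis Un_commute inf_commute)
  let ?A = "(frontier F1 - frontier F2) \<union> (frontier F2 - frontier F1)"
  let ?I = "frontier F1 \<inter> frontier F2"
  have sub2: "par_set ?A e \<inter> par_set ?I e \<subseteq> ?P e" for e
  proof (cases "?A = {} \<or> ?I = {}")
    case True thus ?thesis by (auto simp: par_set_def)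
  next
    case False
    have "par_set ?A e \<subseteq> par_set (frontier ?F) e" using False d12 d21 by (intro par_set_sub) auto
    moreover have "par_set ?I e \<subseteq> par_set (frontier F1) e" using False by (intro par_set_sub) auto
    moreover have "par_set ?I e \<subseteq> par_set (frontier F2) e" using False by (intro par_set_sub) auto
    ultimately show ?thesis by blast
  qed
  have sub3: "(par_set (frontier F1) e \<inter> par_set (frontier F2) e) - par_set ?I e \<subseteq> ?P e" for e
  proof
    fix z assume z: "z \<in> (par_set (frontier F1) e \<inter> par_set (frontier F2) e) - par_set ?I e"
    hence ne: "frontier F1 \<noteq> {}" and z1: "infdist z (frontier F1) \<le> e"
      by (auto simp: par_set_def split: if_splits)
    obtain a where a: "a \<in> frontier F1" "infdist z (frontier F1) = dist z a"
      using infdist_attains_inf[OF compact_imp_closed[OF fc1] ne] by blast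
    have "a \<notin> frontier F2"
    proof
      assume "a \<in> frontier F2"
      hence "z \<in> par_set ?I e" using a z1 by (intro par_set_mem[of a]) auto
      thus False using z by blast
    qed
    hence "a \<in> frontier ?F" using d12 a by blast
    hence "z \<in> par_set (frontier ?F) e" using a z1 by (intro par_set_mem[of a]) auto
    thus "z \<in> ?P e" using z by blast
  qed
  have m: "(\<lambda>x. x) ` {} = {}" by simp
  show ?thesis
  proof (intro conjI)
    show "((\<lambda>e. measure lborel (par_set ?A e \<inter> par_set ?I e) / e) \<longlongrightarrow> 0) (at_right 0)"
      by (rule squeeze0[OF lim]) (auto intro!: divide_right_mono measure_le_compact[OF sub2] cP
          closed_Int par_set_closed borel_closed)
    show "((\<lambda>e. measure lborel ((par_set (frontier F1) e \<inter> par_set (frontier F2) e) - par_set ?I e) / e) \<longlongrightarrow> 0) (at_right 0)"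
      by (rule squeeze0[OF lim]) (auto intro!: divide_right_mono measure_le_compact[OF sub3] cP
          closed_Int par_set_closed borel_closed)
  qed
qed


definition UD :: "'a::euclidean_space set \<Rightarrow> 'a set" where
  "UD C = {z. \<exists>x. unique_nearest C z x}"

definition pp :: "'a::euclidean_space set \<Rightarrow> 'a \<Rightarrow> 'a" where
  "pp C z = (if z \<in> UD C then THE x. unique_nearest C z x else 0)"

lemma un_unique: "unique_nearest C z x \<Longrightarrow> unique_nearest C z y \<Longrightarrow> x = y"
  unfolding unique_nearest_def by (meson antisym)

lemma pp_eq: "unique_nearest C z x \<Longrightarrow> z \<in> UD C \<and> pp C z = x"
proof -
  assume u: "unique_nearest C z x"
  hence "z \<in> UD C" unfolding UD_def by blast
  moreover have "(THE x. unique_nearest C z x) = x"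
    using u un_unique by (metis the_equality)
  ultimately show ?thesis unfolding pp_def by simp
qed

lemma pp_un: "z \<in> UD C \<Longrightarrow> unique_nearest C z (pp C z)"
proof -
  assume "z \<in> UD C"
  then obtain x where x: "unique_nearest C z x" unfolding UD_def by blast
  show ?thesis using pp_eq[OF x] x by simp
qed

lemma un_iff_UD: "unique_nearest C w x \<longleftrightarrow> w \<in> UD C \<and> pp C w = x"
  using pp_eq pp_un by blast

lemma nearest_iff:
  assumes "x \<in> C"
  shows "(\<forall>y\<in>C. dist z x \<le> dist z y) \<longleftrightarrow> dist z x \<le> infdist z C"
proof
  assume "\<forall>y\<in>C. dist z x \<le> dist z y"
  thus "dist z x \<le> infdist z C" using assms by (auto simp: infdist_def intro!: cINF_greatest)
next
  assume "dist z x \<le> infdist z C"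
  thus "\<forall>y\<in>C. dist z x \<le> dist z y" using infdist_le order_trans by blast
qed

lemma un_infdist: "unique_nearest C z x \<Longrightarrow> infdist z C = dist z x"
  unfolding unique_nearest_def using nearest_iff[of x C z] infdist_le[of x C z] by auto

lemma closed_near:
  fixes K C :: "'a::euclidean_space set"
  assumes "compact K"
  shows "closed {z. \<exists>x. x \<in> K \<and> dist z x \<le> infdist z C}"
proof -
  have "closed {p :: 'a \<times> 'a. dist (snd p) (fst p) \<le> infdist (snd p) C}"
    by (intro closed_Collect_le continuous_intros continuous_on_infdist)
  from closed_compact_projection[OF assms this] show ?thesis by simp
qed

lemma closed_near2:
  fixes K :: "('a::euclidean_space \<times> 'a) set" and C :: "'a set"
  assumes "compact K"
  shows "closed {z. \<exists>x. x \<in> K \<and> dist z (fst x) \<le> infdist z C \<and> dist z (snd x) \<le> infdist z C}"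
proof -
  have "closed {p :: ('a \<times> 'a) \<times> 'a. dist (snd p) (fst (fst p)) \<le> infdist (snd p) C \<and>
        dist (snd p) (snd (fst p)) \<le> infdist (snd p) C}"
    by (intro closed_Collect_conj closed_Collect_le continuous_intros continuous_on_infdist)
  from closed_compact_projection[OF assms this] show ?thesis by simp
qed

context
  fixes C :: "'a::euclidean_space set"
  assumes cC: "compact C" and neC: "C \<noteq> {}"
begin

definition Sk :: "nat \<Rightarrow> 'a set" where
  "Sk n = {z. \<exists>x. x \<in> {p \<in> C \<times> C. 1 / Suc n \<le> dist (fst p) (snd p)} \<and>
      dist z (fst x) \<le> infdist z C \<and> dist z (snd x) \<le> infdist z C}"

lemma Sk_closed: "closed (Sk n)"
  unfolding Sk_def
proof (rule closed_near2)
  have "closed {p :: 'a \<times> 'a. 1 / Suc n \<le> dist (fst p) (snd p)}"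
    by (intro closed_Collect_le continuous_intros)
  hence "compact ((C \<times> C) \<inter> {p :: 'a \<times> 'a. 1 / Suc n \<le> dist (fst p) (snd p)})"
    using cC by (intro compact_Int_closed compact_Times) auto
  thus "compact {p \<in> C \<times> C. 1 / real (Suc n) \<le> dist (fst p) (snd p)}"
    by (rule back_subst[of compact]) blast
qed

lemma UD_eq: "UD C = UNIV - (\<Union>n. Sk n)"
proof (intro set_eqI iffI)
  fix z assume "z \<in> UD C"
  then have u: "unique_nearest C z (pp C z)" by (rule pp_un)
  have ia: "infdist z C = dist z (pp C z)" by (rule un_infdist[OF u])
  have "z \<notin> Sk n" for n
  proof
    assume "z \<in> Sk n"
    then obtain a b where ab: "a \<in> C" "b \<in> C" "1 / Suc n \<le> dist a b"
        "dist z a \<le> infdist z C" "dist z b \<le> infdist z C" unfolding Sk_def by auto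
    have pa: "dist z (pp C z) \<le> dist z a" "dist z (pp C z) \<le> dist z b"
      using u ab(1,2) unfolding unique_nearest_def by auto
    have uu: "\<forall>y\<in>C. dist z y = dist z (pp C z) \<longrightarrow> y = pp C z"
      using u unfolding unique_nearest_def by blast
    have "dist z a = dist z (pp C z)" using pa ab(4) ia by linarith
    hence "a = pp C z" using uu ab(1) by blast
    moreover have "dist z b = dist z (pp C z)" using pa ab(5) ia by linarith
    hence "b = pp C z" using uu ab(2) by blast
    ultimately have "dist a b = 0" by simp
    moreover have "0 < 1 / real (Suc n)" by simp
    ultimately show False using ab(3) by linarith
  qed
  thus "z \<in> UNIV - (\<Union>n. Sk n)" by blast
next
  fix z assume z: "z \<in> UNIV - (\<Union>n. Sk n)"
  obtain x where x: "x \<in> C" "infdist z C = dist z x"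
    using infdist_attains_inf[OF compact_imp_closed[OF cC] neC] by blast
  have "unique_nearest C z x"
    unfolding unique_nearest_def
  proof (intro conjI ballI impI)
    show "x \<in> C" by fact
    fix y assume y: "y \<in> C"
    thus "dist z x \<le> dist z y" using x infdist_le by metis
    assume e: "dist z y = dist z x"
    show "y = x"
    proof (rule ccontr)
      assume "y \<noteq> x"
      hence "0 < dist x y" by simp
      then obtain n where n: "inverse (real (Suc n)) < dist x y" using reals_Archimedean by blast
      have "1 / real (Suc n) \<le> dist x y" using n by (simp add: field_simps)
      hence xy: "(x,y) \<in> {p \<in> C \<times> C. 1 / Suc n \<le> dist (fst p) (snd p)}" using x y by auto
      have "z \<in> Sk n" unfolding Sk_def
        by (rule CollectI, rule exI[of _ "(x,y)"]) (use xy x e in simp)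
      thus False using z by blast
    qed
  qed
  thus "z \<in> UD C" unfolding UD_def by blast
qed

lemma UD_borel[measurable]: "UD C \<in> sets borel"
  unfolding UD_eq using Sk_closed by (auto intro!: sets.Diff sets.countable_UN borel_closed)

lemma pp_preimage_closed:
  assumes "closed F"
  shows "pp C -` F = (UD C \<inter> {z. \<exists>x. x \<in> C \<inter> F \<and> dist z x \<le> infdist z C}) \<union>
           (if 0 \<in> F then UNIV - UD C else {})"
proof (intro set_eqI iffI)
  fix z assume z: "z \<in> pp C -` F"
  show "z \<in> (UD C \<inter> {z. \<exists>x. x \<in> C \<inter> F \<and> dist z x \<le> infdist z C}) \<union>
           (if 0 \<in> F then UNIV - UD C else {})"
  proof (cases "z \<in> UD C")
    case True
    hence u: "unique_nearest C z (pp C z)" by (rule pp_un)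
    have "pp C z \<in> C" using u by (simp add: unique_nearest_def)
    moreover have "dist z (pp C z) \<le> infdist z C" using un_infdist[OF u] by simp
    ultimately show ?thesis using True z by blast
  next
    case False thus ?thesis using z by (auto simp: pp_def)
  qed
next
  fix z assume z: "z \<in> (UD C \<inter> {z. \<exists>x. x \<in> C \<inter> F \<and> dist z x \<le> infdist z C}) \<union>
           (if 0 \<in> F then UNIV - UD C else {})"
  show "z \<in> pp C -` F"
  proof (cases "z \<in> UD C")
    case True
    hence u: "unique_nearest C z (pp C z)" by (rule pp_un)
    from True z obtain x where x: "x \<in> C" "x \<in> F" "dist z x \<le> infdist z C"
      by (auto split: if_splits)
    have "dist z x = dist z (pp C z)" using x u un_infdist[OF u] infdist_le[OF x(1), of z] by simp
    hence "x = pp C z" using u x by (auto simp: unique_nearest_def)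
    thus ?thesis using x by simp
  next
    case False thus ?thesis using z by (auto simp: pp_def split: if_splits)
  qed
qed

lemma pp_borel[measurable]: "pp C \<in> borel_measurable borel"
proof (rule borel_measurableI)
  fix S :: "'a set" assume "open S"
  hence cl: "closed (- S)" by auto
  have "compact (C \<inter> - S)" using cC cl by (simp add: compact_Int_closed)
  have a: "UD C \<inter> {z. \<exists>x. x \<in> C \<inter> - S \<and> dist z x \<le> infdist z C} \<in> sets borel"
    using \<open>compact (C \<inter> - S)\<close> by (intro sets.Int UD_borel borel_closed closed_near)
  have b: "(if 0 \<in> - S then UNIV - UD C else {}) \<in> sets borel" by auto
  have "pp C -` (- S) \<in> sets borel"
    unfolding pp_preimage_closed[OF cl] using a b by (rule sets.Un)
  hence "- (pp C -` (- S)) \<in> sets borel" by auto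
  thus "pp C -` S \<inter> space borel \<in> sets borel" by (simp add: vimage_Compl)
qed

end


lemma un_ray:
  assumes u: "unique_nearest C (x + s *\<^sub>R u) x" and t: "0 \<le> t" "t \<le> s"
  shows "unique_nearest C (x + t *\<^sub>R u) x"
proof -
  have xC: "x \<in> C" and near: "\<forall>y\<in>C. dist (x + s *\<^sub>R u) x \<le> dist (x + s *\<^sub>R u) y"
    and uq: "\<forall>y\<in>C. dist (x + s *\<^sub>R u) y = dist (x + s *\<^sub>R u) x \<longrightarrow> y = x"
    using u by (auto simp: unique_nearest_def)
  have d1: "dist (x + s *\<^sub>R u) x = s * norm u" using t by (simp add: dist_norm)
  have d2: "dist (x + t *\<^sub>R u) x = t * norm u" using t by (simp add: dist_norm)
  have "(x + s *\<^sub>R u) - (x + t *\<^sub>R u) = (s - t) *\<^sub>R u" by (simp add: algebra_simps)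
  hence d3: "dist (x + s *\<^sub>R u) (x + t *\<^sub>R u) = (s - t) * norm u" using t by (simp add: dist_norm)
  have tri: "dist (x + s *\<^sub>R u) y \<le> (s - t) * norm u + dist (x + t *\<^sub>R u) y" for y
    using dist_triangle[of "x + s *\<^sub>R u" y "x + t *\<^sub>R u"] d3 t by simp
  show ?thesis
    unfolding unique_nearest_def
  proof (intro conjI ballI impI)
    show "x \<in> C" by fact
    fix y assume y: "y \<in> C"
    have "s * norm u \<le> dist (x + s *\<^sub>R u) y" using near y d1 by auto
    thus le: "dist (x + t *\<^sub>R u) x \<le> dist (x + t *\<^sub>R u) y" using tri[of y] d2
      by (simp add: algebra_simps)
    assume "dist (x + t *\<^sub>R u) y = dist (x + t *\<^sub>R u) x"
    hence "dist (x + s *\<^sub>R u) y \<le> s * norm u" using tri[of y] d2 by (simp add: algebra_simps)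
    hence "dist (x + s *\<^sub>R u) y = dist (x + s *\<^sub>R u) x" using near y d1 by auto
    thus "y = x" using uq y by blast
  qed
qed

lemma Nor_D:
  assumes "(x, u) \<in> Nor C"
  shows "x \<in> C" "norm u = 1" "\<exists>s>0. unique_nearest C (x + s *\<^sub>R u) x"
proof -
  obtain z where z: "z \<notin> C" "unique_nearest C z x" "u = (z - x) /\<^sub>R norm (z - x)"
    using assms unfolding Nor_def by blast
  show xC: "x \<in> C" using z by (simp add: unique_nearest_def)
  hence ne: "z \<noteq> x" using z by auto
  thus "norm u = 1" using z by simp
  have "x + norm (z - x) *\<^sub>R u = z" using ne z(3) by simp
  thus "\<exists>s>0. unique_nearest C (x + s *\<^sub>R u) x" using ne z(2) by (intro exI[of _ "norm (z - x)"]) auto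
qed

lemma ray_lt_reach:
  assumes "ereal t < reach_fun C x u" "0 \<le> t"
  shows "unique_nearest C (x + t *\<^sub>R u) x"
proof -
  obtain s where s: "s > 0" "unique_nearest C (x + s *\<^sub>R u) x" "ereal t < ereal s"
    using assms(1) unfolding reach_fun_def less_Sup_iff by blast
  show ?thesis using un_ray[OF s(2) assms(2)] s(3) by simp
qed

lemma reach_ge:
  assumes "0 < d" "unique_nearest C (x + d *\<^sub>R u) x"
  shows "ereal d \<le> reach_fun C x u"
  unfolding reach_fun_def using assms by (intro Sup_upper) blast

definition Phi :: "'a::euclidean_space set \<Rightarrow> 'a set \<Rightarrow> ('a \<times> 'a) set \<Rightarrow> real \<Rightarrow> 'a \<times> 'a \<Rightarrow> bool" where
  "Phi C T S d p \<longleftrightarrow> fst p \<in> T \<and> p \<in> S \<and> unique_nearest C (fst p + d *\<^sub>R snd p) (fst p)"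

definition EE :: "'a::euclidean_space set \<Rightarrow> 'a set \<Rightarrow> ('a \<times> 'a) set \<Rightarrow> real \<Rightarrow> real \<Rightarrow> 'a set" where
  "EE C T S d e = {z. z \<in> UD C \<and> z \<notin> C \<and> dist z (pp C z) \<le> e \<and>
      Phi C T S d (pp C z, (z - pp C z) /\<^sub>R norm (z - pp C z))}"

lemma EE_borel:
  fixes C :: "'a::euclidean_space set"
  assumes cC: "compact C" and neC: "C \<noteq> {}" and T: "closed T" and S: "S \<in> sets borel"
  shows "EE C T S d e \<in> sets borel"
proof -
  have [measurable]: "pp C \<in> borel_measurable borel" "UD C \<in> sets borel" "S \<in> sets borel"
    "T \<in> sets borel" "C \<in> sets borel"
    using pp_borel[OF cC neC] UD_borel[OF cC neC] S borel_closed[OF T] borel_closed[OF compact_imp_closed[OF cC]]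
    by auto
  have "EE C T S d e = {z \<in> space borel. z \<in> UD C \<and> z \<notin> C \<and> dist z (pp C z) \<le> e \<and>
     pp C z \<in> T \<and> (pp C z, (z - pp C z) /\<^sub>R norm (z - pp C z)) \<in> S \<and>
     pp C z + d *\<^sub>R ((z - pp C z) /\<^sub>R norm (z - pp C z)) \<in> UD C \<and>
     pp C (pp C z + d *\<^sub>R ((z - pp C z) /\<^sub>R norm (z - pp C z))) = pp C z}"
    unfolding EE_def Phi_def un_iff_UD[of C] by auto
  also have "\<dots> \<in> sets borel" by measurable
  finally show ?thesis .
qed

lemma EE_ray:
  assumes xu: "(x, u) \<in> Nor C" and t: "0 < t" "ereal t < reach_fun C x u"
  shows "x + t *\<^sub>R u \<in> EE C T S d e \<longleftrightarrow> t \<le> e \<and> Phi C T S d (x, u)"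
proof -
  have un: "unique_nearest C (x + t *\<^sub>R u) x" using ray_lt_reach[OF t(2)] t by simp
  have n1: "norm u = 1" and xC: "x \<in> C" using Nor_D[OF xu] by auto
  have pp: "x + t *\<^sub>R u \<in> UD C" "pp C (x + t *\<^sub>R u) = x" using pp_eq[OF un] by auto
  have dd: "dist (x + t *\<^sub>R u) x = t" using t n1 by (simp add: dist_norm)
  have nC: "x + t *\<^sub>R u \<notin> C"
  proof
    assume "x + t *\<^sub>R u \<in> C"
    hence "dist (x + t *\<^sub>R u) x \<le> 0" using un unfolding unique_nearest_def by fastforce
    thus False using dd t by simp
  qed
  have v: "((x + t *\<^sub>R u) - x) /\<^sub>R norm ((x + t *\<^sub>R u) - x) = u" using t n1 by simp
  show ?thesis unfolding EE_def using pp nC dd v by simp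
qed


lemma K_val:
  assumes "0 \<le> e" "1 \<le> j"
  shows "(LINT t:{0<..e}|lborel. (t::real) ^ (j - 1)) = e ^ j / j"
proof -
  have "(LINT t:{0<..e}|lborel. t ^ (j - 1)) = (LBINT t=ereal 0..ereal e. t ^ (j - 1))"
    by (rule interval_integral_Ioc[symmetric]) (use assms in simp)
  also have "\<dots> = (LINT t:{0..e}|lborel. t ^ (j - 1))"
    by (rule interval_integral_Icc) fact
  also have "\<dots> = (\<integral>t. t ^ (j - 1) * indicator {0..e} t \<partial>lborel)"
    by (simp add: set_lebesgue_integral_def mult.commute)
  also have "\<dots> = (e ^ Suc (j - 1) - 0 ^ Suc (j - 1)) / Suc (j - 1)"
    by (rule integral_power) fact
  also have "\<dots> = e ^ j / j" using assms by simp
  finally show ?thesis .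
qed

lemma SI_eval:
  assumes xu: "(x, u) \<in> Nor C" and e: "0 < e" "e < d"
  shows "steiner_integrand C (indicator (EE C T S d e)) j (x, u) =
           (if Phi C T S d (x, u) then (LINT t:{0<..e}|lborel. t ^ (j - 1)) else 0)"
proof -
  let ?D = "{t. 0 < t \<and> ereal t < reach_fun C x u}"
  have pw: "indicator ?D t *\<^sub>R (indicator (EE C T S d e) (x + t *\<^sub>R u) * t ^ (j - 1)) =
     (if Phi C T S d (x, u) then indicator {0<..e} t *\<^sub>R t ^ (j - 1) else 0)" for t
  proof (cases "t \<in> ?D")
    case True
    hence "x + t *\<^sub>R u \<in> EE C T S d e \<longleftrightarrow> t \<le> e \<and> Phi C T S d (x, u)"
      using EE_ray[OF xu] by blast
    thus ?thesis using True by (auto simp: indicator_def)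
  next
    case False
    have "\<not> (Phi C T S d (x, u) \<and> t \<in> {0<..e})"
    proof
      assume a: "Phi C T S d (x, u) \<and> t \<in> {0<..e}"
      hence "ereal d \<le> reach_fun C x u" using reach_ge[of d C x u] e by (auto simp: Phi_def)
      moreover have "ereal t < ereal d" using a e by simp
      ultimately have "ereal t < reach_fun C x u" by (metis order.strict_trans2)
      hence "t \<in> ?D" using a by auto
      thus False using False by blast
    qed
    thus ?thesis using False by (auto simp: indicator_def)
  qed
  show ?thesis
    unfolding steiner_integrand_def set_lebesgue_integral_def
    by (simp only: pw case_prod_conv) (auto)
qed

lemma AE_Nor:
  assumes "reach_measure C M"
  shows "AE p in M. p \<in> Nor C"
proof -
  obtain B where B: "B \<in> sets borel" "B \<subseteq> Nor C" "emeasure M (UNIV - B) = 0"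
    using assms unfolding reach_measure_def by blast
  have sM: "sets M = sets borel" using assms unfolding reach_measure_def by blast
  hence sp: "space M = UNIV" using sets_eq_imp_space_eq by fastforce
  have "UNIV - B \<in> null_sets M" using B sM by (auto simp: null_sets_def)
  thus ?thesis by (rule AE_I') (use B sp in auto)
qed


lemma EE_sub_par: "EE C T S d e \<subseteq> par_set C e"
proof
  fix z assume z: "z \<in> EE C T S d e"
  hence "z \<in> UD C" "dist z (pp C z) \<le> e" by (auto simp: EE_def)
  moreover have "pp C z \<in> C" using pp_un[OF \<open>z \<in> UD C\<close>] by (simp add: unique_nearest_def)
  ultimately show "z \<in> par_set C e" using par_set_mem by blast
qed

lemma EE_disj: "EE C T S d e \<inter> C = {}"
  by (auto simp: EE_def)

lemma core:
  fixes C :: "'a::euclidean_space set" and \<Theta>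
  assumes cC: "compact C" and neC: "C \<noteq> {}" and T: "closed T" and S: "S \<in> sets borel"
    and d: "0 < d" and supp: "support_measures C \<Theta>"
    and lim: "((\<lambda>e. measure lborel (EE C T S d e) / e) \<longlongrightarrow> 0) (at_right 0)"
  shows "integral\<^sup>L (fst (\<Theta> (DIM('a) - 1))) (steiner_integrand C (indicator (EE C T S d (d/2))) 1) =
         integral\<^sup>L (snd (\<Theta> (DIM('a) - 1))) (steiner_integrand C (indicator (EE C T S d (d/2))) 1)"
proof -
  define n where "n = DIM('a)"
  define e0 where "e0 = d / 2"
  have e0: "0 < e0" "e0 < d" using d by (auto simp: e0_def)
  define SI where "SI e j = steiner_integrand C (indicator (EE C T S d e) :: 'a \<Rightarrow> real) j" for e j
  define a where "a j = integral\<^sup>L (fst (\<Theta> (n - j))) (SI e0 j) - integral\<^sup>L (snd (\<Theta> (n - j))) (SI e0 j)" for j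
  have n1: "1 \<le> n" unfolding n_def using DIM_positive by (simp add: Suc_le_eq)
  have rm: "reach_measure C (fst (\<Theta> i))" "reach_measure C (snd (\<Theta> i))" if "i < n" for i
    using supp that unfolding support_measures_def n_def by auto
  have steiner: "\<And>f :: 'a \<Rightarrow> real. f \<in> borel_measurable borel \<Longrightarrow> bounded (range f) \<Longrightarrow> bounded {z. f z \<noteq> 0}
        \<Longrightarrow> (\<forall>j\<in>{1..n}. integrable (fst (\<Theta> (n - j))) (steiner_integrand C f j) \<and>
               integrable (snd (\<Theta> (n - j))) (steiner_integrand C f j)) \<and>
            (LINT z : (UNIV - C) | lborel. f z) =
              (\<Sum>j = 1..n. real (n - 1 choose (j - 1)) *
                 ((\<integral>p. steiner_integrand C f j p \<partial>fst (\<Theta> (n - j))) -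
                  (\<integral>p. steiner_integrand C f j p \<partial>snd (\<Theta> (n - j)))))"
    using supp unfolding support_measures_def n_def by blast
  have fconds: "indicator (EE C T S d e) \<in> borel_measurable borel \<and> bounded (range (indicator (EE C T S d e) :: 'a \<Rightarrow> real))
      \<and> bounded {z. (indicator (EE C T S d e) z :: real) \<noteq> 0}" for e
  proof (intro conjI)
    show "indicator (EE C T S d e) \<in> borel_measurable borel"
      using EE_borel[OF cC neC T S] by simp
    have "range (indicator (EE C T S d e) :: 'a \<Rightarrow> real) \<subseteq> {0, 1}" by (auto simp: indicator_def)
    thus "bounded (range (indicator (EE C T S d e) :: 'a \<Rightarrow> real))"
      by (rule bounded_subset[rotated]) simp
    have "{z. (indicator (EE C T S d e) z :: real) \<noteq> 0} = EE C T S d e" by (auto simp: indicator_def)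
    also have "\<dots> \<subseteq> par_set C e" by (rule EE_sub_par)
    finally show "bounded {z. (indicator (EE C T S d e) z :: real) \<noteq> 0}"
      using par_set_compact[OF cC] compact_imp_bounded bounded_subset by blast
  qed
  have scale: "integral\<^sup>L M (SI e j) = (e / e0) ^ j * integral\<^sup>L M (SI e0 j)"
    if M: "reach_measure C M" and j: "1 \<le> j" and e: "0 < e" "e < d"
      and m1: "SI e j \<in> borel_measurable M" and m2: "SI e0 j \<in> borel_measurable M" for M e j
  proof -
    have "AE p in M. SI e j p = (e / e0) ^ j * SI e0 j p"
      using AE_Nor[OF M]
    proof (rule AE_mp, intro AE_I2 impI)
      fix p assume p: "p \<in> Nor C"
      obtain x u where xu: "p = (x, u)" by fastforce
      have h: "e ^ j = (e / e0) ^ j * e0 ^ j" using e0 by (simp add: power_divide)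
      thus "SI e j p = (e / e0) ^ j * SI e0 j p"
        unfolding SI_def xu using SI_eval[OF p[unfolded xu] e] SI_eval[OF p[unfolded xu] e0]
          K_val[OF _ j, of e] K_val[OF _ j, of e0] e e0 h by simp
    qed
    hence "integral\<^sup>L M (SI e j) = integral\<^sup>L M (\<lambda>p. (e / e0) ^ j * SI e0 j p)"
      by (intro integral_cong_AE) (use m1 m2 in auto)
    thus ?thesis by simp
  qed
  define g where "g e = (\<Sum>j = 1..n. real (n - 1 choose (j - 1)) * (e ^ (j - 1) / e0 ^ j) * a j)" for e
  have main: "measure lborel (EE C T S d e) / e = g e" if e: "0 < e" "e < d" for e
  proof -
    obtain I where I: "\<forall>j\<in>{1..n}. integrable (fst (\<Theta> (n - j))) (SI e j) \<and> integrable (snd (\<Theta> (n - j))) (SI e j)"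
       and eq: "(LINT z : (UNIV - C) | lborel. (indicator (EE C T S d e) z :: real)) =
              (\<Sum>j = 1..n. real (n - 1 choose (j - 1)) *
                 (integral\<^sup>L (fst (\<Theta> (n - j))) (SI e j) - integral\<^sup>L (snd (\<Theta> (n - j))) (SI e j)))"
      using steiner[of "indicator (EE C T S d e)"] fconds[of e] unfolding SI_def by blast
    have I0: "\<forall>j\<in>{1..n}. integrable (fst (\<Theta> (n - j))) (SI e0 j) \<and> integrable (snd (\<Theta> (n - j))) (SI e0 j)"
      using steiner[of "indicator (EE C T S d e0)"] fconds[of e0] unfolding SI_def by blast
    have lhs: "(LINT z : (UNIV - C) | lborel. (indicator (EE C T S d e) z :: real)) = measure lborel (EE C T S d e)"
    proof -
      have "(\<lambda>z. indicator (UNIV - C) z *\<^sub>R (indicator (EE C T S d e) z :: real)) = indicator (EE C T S d e)"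
        using EE_disj[of C T S d e] by (auto simp: indicator_def fun_eq_iff)
      thus ?thesis unfolding set_lebesgue_integral_def by simp
    qed
    have terms: "real (n - 1 choose (j - 1)) *
                 (integral\<^sup>L (fst (\<Theta> (n - j))) (SI e j) - integral\<^sup>L (snd (\<Theta> (n - j))) (SI e j)) / e
       = real (n - 1 choose (j - 1)) * (e ^ (j - 1) / e0 ^ j) * a j" if j: "j \<in> {1..n}" for j
    proof -
      have jn: "n - j < n" "1 \<le> j" using j n1 by auto
      have s1: "integral\<^sup>L (fst (\<Theta> (n - j))) (SI e j) = (e / e0) ^ j * integral\<^sup>L (fst (\<Theta> (n - j))) (SI e0 j)"
        using I I0 j by (intro scale[OF rm(1)[OF jn(1)] jn(2) e]) auto
      have s2: "integral\<^sup>L (snd (\<Theta> (n - j))) (SI e j) = (e / e0) ^ j * integral\<^sup>L (snd (\<Theta> (n - j))) (SI e0 j)"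
        using I I0 j by (intro scale[OF rm(2)[OF jn(1)] jn(2) e]) auto
      obtain k where k: "j = Suc k" using jn(2) by (cases j) auto
      show ?thesis unfolding s1 s2 unfolding a_def k using e e0
        by (simp add: power_divide field_simps)
    qed
    have "measure lborel (EE C T S d e) / e =
       (\<Sum>j = 1..n. real (n - 1 choose (j - 1)) *
                 (integral\<^sup>L (fst (\<Theta> (n - j))) (SI e j) - integral\<^sup>L (snd (\<Theta> (n - j))) (SI e j)) / e)"
      unfolding lhs[symmetric] eq by (simp add: sum_divide_distrib)
    also have "\<dots> = g e" unfolding g_def by (rule sum.cong[OF refl terms])
    finally show ?thesis .
  qed
  have "(g \<longlongrightarrow> g 0) (at_right 0)"
    unfolding g_def using e0 by (intro tendsto_intros) auto
  moreover have "\<forall>\<^sub>F e in at_right 0. g e = measure lborel (EE C T S d e) / e"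
    unfolding eventually_at_right_field by (rule exI[of _ d]) (use d main in auto)
  ultimately have "((\<lambda>e. measure lborel (EE C T S d e) / e) \<longlongrightarrow> g 0) (at_right 0)"
    by (rule Lim_transform_eventually)
  hence g0: "g 0 = 0" using tendsto_unique[OF _ _ lim] trivial_limit_at_right_real by blast
  have "g 0 = (\<Sum>j = 1..n. if j = 1 then a 1 / e0 else 0)"
    unfolding g_def by (rule sum.cong) auto
  also have "\<dots> = a 1 / e0" using n1 by simp
  finally have "a 1 = 0" using g0 e0 by simp
  thus ?thesis unfolding a_def SI_def n_def e0_def by simp
qed


lemma EE_fconds:
  fixes C :: "'a::euclidean_space set"
  assumes cC: "compact C" and neC: "C \<noteq> {}" and T: "closed T" and S: "S \<in> sets borel"
  shows "indicator (EE C T S d e) \<in> borel_measurable borel \<and> bounded (range (indicator (EE C T S d e) :: 'a \<Rightarrow> real))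
      \<and> bounded {z. (indicator (EE C T S d e) z :: real) \<noteq> 0}"
proof (intro conjI)
  show "indicator (EE C T S d e) \<in> borel_measurable borel"
    using EE_borel[OF cC neC T S] by simp
  have "range (indicator (EE C T S d e) :: 'a \<Rightarrow> real) \<subseteq> {0, 1}" by (auto simp: indicator_def)
  thus "bounded (range (indicator (EE C T S d e) :: 'a \<Rightarrow> real))"
    by (rule bounded_subset[rotated]) simp
  have "{z. (indicator (EE C T S d e) z :: real) \<noteq> 0} = EE C T S d e" by (auto simp: indicator_def)
  also have "\<dots> \<subseteq> par_set C e" by (rule EE_sub_par)
  finally show "bounded {z. (indicator (EE C T S d e) z :: real) \<noteq> 0}"
    using par_set_compact[OF cC] compact_imp_bounded bounded_subset by blast
qed

lemma side:
  fixes C :: "'a::euclidean_space set"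
  assumes cC: "compact C" and T: "closed T" and S: "S \<in> sets borel"
    and M1: "reach_measure C M1" and M2: "reach_measure C M2"
    and int1: "\<And>d. 0 < d \<Longrightarrow> integrable M1 (steiner_integrand C (indicator (EE C T S d (d/2))) 1)"
    and int2: "\<And>d. 0 < d \<Longrightarrow> integrable M2 (steiner_integrand C (indicator (EE C T S d (d/2))) 1)"
    and eq: "\<And>d. 0 < d \<Longrightarrow> integral\<^sup>L M1 (steiner_integrand C (indicator (EE C T S d (d/2))) 1) =
                          integral\<^sup>L M2 (steiner_integrand C (indicator (EE C T S d (d/2))) 1)"
    and M2S: "emeasure M2 S = 0"
  shows "AE p in M1. \<not> (p \<in> Nor C \<and> fst p \<in> T \<and> p \<in> S)"
proof -
  have sM2: "sets M2 = sets borel" using M2 unfolding reach_measure_def by blast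
  have one: "AE p in M1. p \<in> Nor C \<longrightarrow> \<not> Phi C T S d p" if d: "0 < d" for d
  proof -
    define G where "G = steiner_integrand C (indicator (EE C T S d (d/2)) :: 'a \<Rightarrow> real) 1"
    have dd: "0 < d/2" "d/2 < d" using d by auto
    have Gv: "G p = (if Phi C T S d p then d/2 else 0)" if "p \<in> Nor C" for p
    proof -
      obtain x u where xu: "p = (x, u)" by fastforce
      show ?thesis unfolding G_def xu using SI_eval[OF that[unfolded xu] dd, of T S 1] K_val[of "d/2" 1] d
        by simp
    qed
    have "S \<in> null_sets M2" using S M2S sM2 by (auto simp: null_sets_def)
    hence "AE p in M2. p \<notin> S" by (rule AE_not_in)
    hence "AE p in M2. G p = 0" using AE_Nor[OF M2]
      by eventually_elim (auto simp: Gv Phi_def)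
    hence "integral\<^sup>L M2 G = 0" by (rule integral_eq_zero_AE)
    hence i1: "integral\<^sup>L M1 G = 0" using eq[OF d] unfolding G_def by simp
    have "AE p in M1. 0 \<le> G p" using AE_Nor[OF M1] by eventually_elim (use d Gv in auto)
    hence "AE p in M1. G p = 0" using integral_nonneg_eq_0_iff_AE[of M1 G] int1[OF d] i1
      unfolding G_def by simp
    thus ?thesis using AE_Nor[OF M1] by eventually_elim (use d Gv in auto)
  qed
  have "AE p in M1. \<forall>k::nat. p \<in> Nor C \<longrightarrow> \<not> Phi C T S (1 / Suc k) p"
    unfolding AE_all_countable using one by simp
  thus ?thesis
  proof eventually_elim
    case (elim p)
    show ?case
    proof
      assume p: "p \<in> Nor C \<and> fst p \<in> T \<and> p \<in> S"
      obtain x u where xu: "p = (x, u)" by fastforce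
      obtain s where s: "s > 0" "unique_nearest C (x + s *\<^sub>R u) x" using Nor_D(3) p xu by blast
      obtain k where k: "inverse (real (Suc k)) < s" using reals_Archimedean s(1) by blast
      have "unique_nearest C (x + (1 / Suc k) *\<^sub>R u) x"
        using un_ray[OF s(2)] k by (simp add: inverse_eq_divide)
      hence "Phi C T S (1 / Suc k) p" using p xu by (simp add: Phi_def)
      thus False using elim p by blast
    qed
  qed
qed


theorem lemma7:
  fixes F1 F2 :: "'a::euclidean_space set"
  assumes "normal_decomposition F1 F2"
  shows "(\<forall>\<Theta>. support_measures (frontier F1 \<union> frontier F2) \<Theta> \<longrightarrow>
            (\<exists>B\<in>sets borel.
               {(x, u) \<in> Nor (frontier F1 \<union> frontier F2).
                   x \<in> frontier (F1 \<union> F2) \<inter> frontier F1 \<inter> frontier F2} \<subseteq> B \<and>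
               emeasure (fst (\<Theta> (DIM('a) - 1))) B = 0 \<and>
               emeasure (snd (\<Theta> (DIM('a) - 1))) B = 0))
       \<and> ((\<lambda>\<epsilon>. measure lborel
              (par_set ((frontier F1 - frontier F2) \<union> (frontier F2 - frontier F1)) \<epsilon>
               \<inter> par_set (frontier F1 \<inter> frontier F2) \<epsilon>) / \<epsilon>) \<longlongrightarrow> 0) (at_right 0)
       \<and> ((\<lambda>\<epsilon>. measure lborel
              ((par_set (frontier F1) \<epsilon> \<inter> par_set (frontier F2) \<epsilon>)
               - par_set (frontier F1 \<inter> frontier F2) \<epsilon>) / \<epsilon>) \<longlongrightarrow> 0) (at_right 0)"
proof (intro conjI)
  show "((\<lambda>\<epsilon>. measure lborel
              (par_set ((frontier F1 - frontier F2) \<union> (frontier F2 - frontier F1)) \<epsilon>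
               \<inter> par_set (frontier F1 \<inter> frontier F2) \<epsilon>) / \<epsilon>) \<longlongrightarrow> 0) (at_right 0)"
    using part23[OF assms] by blast
  show "((\<lambda>\<epsilon>. measure lborel
              ((par_set (frontier F1) \<epsilon> \<inter> par_set (frontier F2) \<epsilon>)
               - par_set (frontier F1 \<inter> frontier F2) \<epsilon>) / \<epsilon>) \<longlongrightarrow> 0) (at_right 0)"
    using part23[OF assms] by blast
  show "\<forall>\<Theta>. support_measures (frontier F1 \<union> frontier F2) \<Theta> \<longrightarrow>
            (\<exists>B\<in>sets borel.
               {(x, u) \<in> Nor (frontier F1 \<union> frontier F2).
                   x \<in> frontier (F1 \<union> F2) \<inter> frontier F1 \<inter> frontier F2} \<subseteq> B \<and>
               emeasure (fst (\<Theta> (DIM('a) - 1))) B = 0 \<and>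
               emeasure (snd (\<Theta> (DIM('a) - 1))) B = 0)"
  proof (intro allI impI)
    fix \<Theta> assume supp: "support_measures (frontier F1 \<union> frontier F2) \<Theta>"
    define C where "C = frontier F1 \<union> frontier F2"
    define T where "T = frontier (F1 \<union> F2) \<inter> frontier F1 \<inter> frontier F2"
    define n where "n = DIM('a)"
    let ?F = "F1 \<union> F2"
    let ?P = "\<lambda>e. par_set (frontier ?F) e \<inter> par_set (frontier F1) e \<inter> par_set (frontier F2) e"
    have s1: "solid F1" and s2: "solid F2"
      and lim: "((\<lambda>e. measure lborel (?P e) / e) \<longlongrightarrow> 0) (at_right 0)"
      using assms by (auto simp: normal_decomposition_def)
    have c1: "compact F1" and c2: "compact F2" using s1 s2 by (auto simp: solid_def)
    have cC: "compact C" unfolding C_def using c1 c2 by auto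
    have cT: "closed T" unfolding T_def by auto
    have cP: "compact (?P e)" for e using c1 c2
      by (intro compact_Int par_set_compact) auto
    have tgt: "{(x, u) \<in> Nor C. x \<in> T} = {p. p \<in> Nor C \<and> fst p \<in> T}" by auto
    show "\<exists>B\<in>sets borel.
               {(x, u) \<in> Nor (frontier F1 \<union> frontier F2).
                   x \<in> frontier (F1 \<union> F2) \<inter> frontier F1 \<inter> frontier F2} \<subseteq> B \<and>
               emeasure (fst (\<Theta> (DIM('a) - 1))) B = 0 \<and>
               emeasure (snd (\<Theta> (DIM('a) - 1))) B = 0"
      unfolding C_def[symmetric] T_def[symmetric] n_def[symmetric] tgt
    proof (cases "C = {}")
      case True
      have "Nor C = {}" using Nor_D(1) True by fastforce
      thus "\<exists>B\<in>sets borel. {p. p \<in> Nor C \<and> fst p \<in> T} \<subseteq> B \<and>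
               emeasure (fst (\<Theta> (n - 1))) B = 0 \<and> emeasure (snd (\<Theta> (n - 1))) B = 0"
        by (intro bexI[of _ "{}"]) auto
    next
      case neC: False
      have supp': "support_measures C \<Theta>" using supp by (simp add: C_def)
      have n1: "1 \<le> n" unfolding n_def using DIM_positive by (simp add: Suc_le_eq)
      have rm: "reach_measure C (fst (\<Theta> (n - 1)))" "reach_measure C (snd (\<Theta> (n - 1)))"
        using supp' n1 unfolding support_measures_def n_def by auto
      obtain SJ where SJ: "SJ \<in> sets borel" "emeasure (fst (\<Theta> (n - 1))) (UNIV - SJ) = 0"
          "emeasure (snd (\<Theta> (n - 1))) SJ = 0"
        using supp' n1 unfolding support_measures_def n_def by (meson diff_less zero_less_one less_le_trans)
      have limS: "((\<lambda>e. measure lborel (EE C T S d e) / e) \<longlongrightarrow> 0) (at_right 0)"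
        if S: "S \<in> sets borel" for S d
      proof (rule squeeze0[OF lim])
        fix e :: real assume e: "0 < e"
        show "0 \<le> measure lborel (EE C T S d e) / e" using e by simp
        have sub: "EE C T S d e \<subseteq> ?P e"
        proof
          fix z assume z: "z \<in> EE C T S d e"
          hence "pp C z \<in> T" "dist z (pp C z) \<le> e" by (auto simp: EE_def Phi_def)
          thus "z \<in> ?P e" unfolding T_def using par_set_mem by blast
        qed
        show "measure lborel (EE C T S d e) / e \<le> measure lborel (?P e) / e"
          using e by (intro divide_right_mono measure_le_compact[OF sub] cP) (auto simp: EE_borel[OF cC neC cT S])
      qed
      define G where "G S d = steiner_integrand C (indicator (EE C T S d (d/2)) :: 'a \<Rightarrow> real) 1" for S d
      have eqS: "integral\<^sup>L (fst (\<Theta> (n - 1))) (G S d) = integral\<^sup>L (snd (\<Theta> (n - 1))) (G S d)"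
        if "S \<in> sets borel" "0 < d" for S d
        using core[OF cC neC cT that(1) that(2) supp' limS[OF that(1)]] unfolding G_def n_def by simp
      have intS: "integrable (fst (\<Theta> (n - 1))) (G S d) \<and> integrable (snd (\<Theta> (n - 1))) (G S d)"
        if "S \<in> sets borel" for S d
      proof -
        have "\<forall>j\<in>{1..n}. integrable (fst (\<Theta> (n - j))) (steiner_integrand C (indicator (EE C T S d (d/2)) :: 'a \<Rightarrow> real) j) \<and>
               integrable (snd (\<Theta> (n - j))) (steiner_integrand C (indicator (EE C T S d (d/2)) :: 'a \<Rightarrow> real) j)"
          using supp' EE_fconds[OF cC neC cT that, of d "d/2"] unfolding support_measures_def n_def by blast
        thus ?thesis using n1 unfolding G_def by auto
      qed
      have AP: "AE p in fst (\<Theta> (n - 1)). \<not> (p \<in> Nor C \<and> fst p \<in> T \<and> p \<in> SJ)"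
        by (rule side[OF cC cT SJ(1) rm(1) rm(2) _ _ _ SJ(3)])
           (use intS[OF SJ(1)] eqS[OF SJ(1)] in \<open>auto simp: G_def\<close>)
      have SJc: "UNIV - SJ \<in> sets borel" using SJ(1) by auto
      have AN: "AE p in snd (\<Theta> (n - 1)). \<not> (p \<in> Nor C \<and> fst p \<in> T \<and> p \<in> UNIV - SJ)"
        by (rule side[OF cC cT SJc rm(2) rm(1) _ _ _ SJ(2)])
           (use intS[OF SJc] eqS[OF SJc] in \<open>auto simp: G_def\<close>)
      have spP: "space (fst (\<Theta> (n - 1))) = UNIV" and spN: "space (snd (\<Theta> (n - 1))) = UNIV"
        and sP: "sets (fst (\<Theta> (n - 1))) = sets borel" and sN: "sets (snd (\<Theta> (n - 1))) = sets borel"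
        using rm unfolding reach_measure_def by (auto dest: sets_eq_imp_space_eq)
      obtain ZP where ZP: "{p \<in> space (fst (\<Theta> (n - 1))). \<not> \<not> (p \<in> Nor C \<and> fst p \<in> T \<and> p \<in> SJ)} \<subseteq> ZP"
          "emeasure (fst (\<Theta> (n - 1))) ZP = 0" "ZP \<in> sets (fst (\<Theta> (n - 1)))"
        using AP by (rule AE_E)
      obtain ZN where ZN: "{p \<in> space (snd (\<Theta> (n - 1))). \<not> \<not> (p \<in> Nor C \<and> fst p \<in> T \<and> p \<in> UNIV - SJ)} \<subseteq> ZN"
          "emeasure (snd (\<Theta> (n - 1))) ZN = 0" "ZN \<in> sets (snd (\<Theta> (n - 1)))"
        using AN by (rule AE_E)
      define B where "B = (ZP \<union> (UNIV - SJ)) \<inter> (ZN \<union> SJ)"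
      have Bs: "B \<in> sets borel" unfolding B_def using ZP(3) ZN(3) sP sN SJ(1) by auto
      have "ZP \<union> (UNIV - SJ) \<in> null_sets (fst (\<Theta> (n - 1)))"
        using ZP SJ SJc sP by (intro null_sets.Un) (auto simp: null_sets_def)
      hence B1: "B \<in> null_sets (fst (\<Theta> (n - 1)))"
        by (rule null_sets_subset) (use Bs sP in \<open>auto simp: B_def\<close>)
      have "ZN \<union> SJ \<in> null_sets (snd (\<Theta> (n - 1)))"
        using ZN SJ sN by (intro null_sets.Un) (auto simp: null_sets_def)
      hence B2: "B \<in> null_sets (snd (\<Theta> (n - 1)))"
        by (rule null_sets_subset) (use Bs sN in \<open>auto simp: B_def\<close>)
      have "{p. p \<in> Nor C \<and> fst p \<in> T} \<subseteq> B"
        using ZP(1) ZN(1) spP spN unfolding B_def by blast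
      thus "\<exists>B\<in>sets borel. {p. p \<in> Nor C \<and> fst p \<in> T} \<subseteq> B \<and>
               emeasure (fst (\<Theta> (n - 1))) B = 0 \<and> emeasure (snd (\<Theta> (n - 1))) B = 0"
        using Bs B1 B2 by (intro bexI[of _ B]) auto
    qed
  qed
qed

end
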